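(* For an $L$-layer ADMM-CSNet at initialization (all weight entries i.i.d. $\mathcal N(0,1)$), for every $l\in[L]$ and $s\in[m]$, $\|\mathbf b^l_{s,0}\|_\infty=\tilde O(1/\sqrt m)$ with probability $1-me^{-c^l_{bs}\ln^2(m)}$ for some constant $c^l_{bs}>0$.
   Context: Fix $\lambda>0$ and $\sigma(x)=\log(1+e^{x-\lambda})-\log(1+e^{-x-\lambda})$ (componentwise), $L_\sigma$-Lipschitz and $\beta_\sigma$-smooth. ADMM-CSNet: input $\mathbf y\in\mathbb R^n$ with $|y_i|\le C_y$, initial $\mathbf z^0,\mathbf u^0\in\mathbb R^m$ with $|z^0_i|\le C_z$, $|u^0_i|\le C_u$; $\mathbf x^l=\frac1{\sqrt n}W_1^l\mathbf y+\frac1{\sqrt m}W_2^l(\mathbf z^{l-1}-\mathbf u^{l-1})$, $\mathbf z^l=\sigma(\mathbf x^l+\mathbf u^{l-1})$, $\mathbf u^l=\mathbf u^{l-1}+\mathbf x^l-\mathbf z^l$, $W_1^l\in\mathbb R^{m\times n}$, $W_2^l\in\mathbb R^{m\times m}$, output $\mathbf f=\frac1{\sqrt m}\mathbf z^L$, $f_s$ its $s$-th entry. $\mathbf b^l_{s,0}$ denotes $\partial f_s/\partial\mathbf z^l$ at the initial weights. $\tilde O$ is with respect to $m$, suppressing logarithmic factors. *)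

theory Defs
  imports "HOL-Probability.Probability"
begin

definition admm_sigma :: "real \<Rightarrow> real \<Rightarrow> real" where
  "admm_sigma lam x = ln (1 + exp (x - lam)) - ln (1 + exp (- x - lam))"

text \<open>Weights: W (l, 1, i, j) is entry (i,j) of W_1^l (i < m, j < n);
  W (l, 2, i, j) is entry (i,j) of W_2^l (i < m, j < m); layers l = 1..L.
  Vectors in R^m / R^n are functions nat => real, only indices < m (< n) matter.\<close>
type_synonym widx = "nat \<times> nat \<times> nat \<times> nat"

definition weight_idx :: "nat \<Rightarrow> nat \<Rightarrow> nat \<Rightarrow> widx set" where
  "weight_idx L n m =
     {(l, k, i, j) | l k i j. 1 \<le> l \<and> l \<le> L \<and> i < m \<and>
        ((k = 1 \<and> j < n) \<or> (k = 2 \<and> j < m))}"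

definition init_measure :: "nat \<Rightarrow> nat \<Rightarrow> nat \<Rightarrow> (widx \<Rightarrow> real) measure" where
  "init_measure L n m = PiM (weight_idx L n m) (\<lambda>_. density lborel std_normal_density)"

definition admm_x :: "nat \<Rightarrow> nat \<Rightarrow> (widx \<Rightarrow> real) \<Rightarrow> (nat \<Rightarrow> real) \<Rightarrow> nat
    \<Rightarrow> (nat \<Rightarrow> real) \<Rightarrow> (nat \<Rightarrow> real) \<Rightarrow> (nat \<Rightarrow> real)" where
  "admm_x n m W y l z u = (\<lambda>i.
      (\<Sum>j<n. W (l, 1, i, j) * y j) / sqrt (real n)
    + (\<Sum>j<m. W (l, 2, i, j) * (z j - u j)) / sqrt (real m))"

definition admm_layer :: "real \<Rightarrow> nat \<Rightarrow> nat \<Rightarrow> (widx \<Rightarrow> real) \<Rightarrow> (nat \<Rightarrow> real) \<Rightarrow> nat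
    \<Rightarrow> (nat \<Rightarrow> real) \<times> (nat \<Rightarrow> real) \<Rightarrow> (nat \<Rightarrow> real) \<times> (nat \<Rightarrow> real)" where
  "admm_layer lam n m W y l zu =
     (let z = fst zu; u = snd zu; x = admm_x n m W y l z u;
          z' = (\<lambda>i. admm_sigma lam (x i + u i)) in
      (z', (\<lambda>i. u i + x i - z' i)))"

text \<open>Apply k layers, starting after layer l (i.e. layers l+1, ..., l+k).\<close>
fun admm_steps :: "real \<Rightarrow> nat \<Rightarrow> nat \<Rightarrow> (widx \<Rightarrow> real) \<Rightarrow> (nat \<Rightarrow> real) \<Rightarrow> nat \<Rightarrow> nat
    \<Rightarrow> (nat \<Rightarrow> real) \<times> (nat \<Rightarrow> real) \<Rightarrow> (nat \<Rightarrow> real) \<times> (nat \<Rightarrow> real)" where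
  "admm_steps lam n m W y l 0 zu = zu"
| "admm_steps lam n m W y l (Suc k) zu =
     admm_steps lam n m W y (Suc l) k (admm_layer lam n m W y (Suc l) zu)"

definition admm_state where
  "admm_state lam n m W y z0 u0 l = admm_steps lam n m W y 0 l (z0, u0)"

text \<open>f_s as a function of z^l (all other quantities given by the forward recursion; in
  particular u^l = u^{l-1} + x^l - z^l, and layers l+1..L are applied).\<close>
definition admm_out_from :: "real \<Rightarrow> nat \<Rightarrow> nat \<Rightarrow> nat \<Rightarrow> (widx \<Rightarrow> real) \<Rightarrow> (nat \<Rightarrow> real)
    \<Rightarrow> (nat \<Rightarrow> real) \<Rightarrow> (nat \<Rightarrow> real) \<Rightarrow> nat \<Rightarrow> nat \<Rightarrow> (nat \<Rightarrow> real) \<Rightarrow> real" where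
  "admm_out_from lam L n m W y z0 u0 l s z =
     (let prev = admm_state lam n m W y z0 u0 (l - 1);
          x = admm_x n m W y l (fst prev) (snd prev);
          u = (\<lambda>i. snd prev i + x i - z i) in
      fst (admm_steps lam n m W y l (L - l) (z, u)) s / sqrt (real m))"

definition admm_b :: "real \<Rightarrow> nat \<Rightarrow> nat \<Rightarrow> nat \<Rightarrow> (widx \<Rightarrow> real) \<Rightarrow> (nat \<Rightarrow> real)
    \<Rightarrow> (nat \<Rightarrow> real) \<Rightarrow> (nat \<Rightarrow> real) \<Rightarrow> nat \<Rightarrow> nat \<Rightarrow> nat \<Rightarrow> real" where
  "admm_b lam L n m W y z0 u0 l s j =
     (let zl = fst (admm_state lam n m W y z0 u0 l) in
      deriv (\<lambda>t. admm_out_from lam L n m W y z0 u0 l s (zl(j := t))) (zl j))"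

definition admm_b_supnorm where
  "admm_b_supnorm lam L n m W y z0 u0 l s =
     Max ((\<lambda>j. \<bar>admm_b lam L n m W y z0 u0 l s j\<bar>) ` {..<m})"

end

theory Submission
  imports Defs
begin

definition sd :: "real \<Rightarrow> real \<Rightarrow> real" where
  "sd lam x = exp (x - lam) / (1 + exp (x - lam)) + exp (- x - lam) / (1 + exp (- x - lam))"

lemma sigma_deriv: "(admm_sigma lam has_real_derivative sd lam x) (at x)"
  unfolding admm_sigma_def sd_def
  apply (rule derivative_eq_intros refl | simp add: add_pos_pos)+
  done

lemma sd_bound: "\<bar>sd lam x\<bar> \<le> 2"
proof -
  have a: "exp (x - lam) / (1 + exp (x - lam)) \<le> 1" "0 \<le> exp (x - lam) / (1 + exp (x - lam))"
    by (auto simp: divide_simps add_pos_pos)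
  have b: "exp (- x - lam) / (1 + exp (- x - lam)) \<le> 1" "0 \<le> exp (- x - lam) / (1 + exp (- x - lam))"
    by (auto simp: divide_simps add_pos_pos)
  show ?thesis unfolding sd_def using a b by linarith
qed

definition mv :: "nat \<Rightarrow> (nat \<Rightarrow> nat \<Rightarrow> real) \<Rightarrow> (nat \<Rightarrow> real) \<Rightarrow> nat \<Rightarrow> real" where
  "mv m A v = (\<lambda>i. \<Sum>j<m. A i j * v j)"

definition opb :: "nat \<Rightarrow> (nat \<Rightarrow> nat \<Rightarrow> real) \<Rightarrow> real \<Rightarrow> bool" where
  "opb m A \<beta> \<longleftrightarrow> (\<forall>v. L2_set (mv m A v) {..<m} \<le> \<beta> * L2_set v {..<m})"

definition tang :: "nat \<Rightarrow> real \<Rightarrow> (real \<Rightarrow> (nat \<Rightarrow> real) \<times> (nat \<Rightarrow> real)) \<Rightarrow> (nat \<Rightarrow> real) \<Rightarrow> (nat \<Rightarrow> real) \<Rightarrow> bool" where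
  "tang m t0 zu dz du \<longleftrightarrow> (\<forall>i<m. ((\<lambda>t. fst (zu t) i) has_real_derivative dz i) (at t0)
      \<and> ((\<lambda>t. snd (zu t) i) has_real_derivative du i) (at t0))"

lemma L2_abs: "L2_set (\<lambda>i. \<bar>f i\<bar>) A = L2_set f A"
  unfolding L2_set_def by simp

lemma L2_pw:
  assumes "\<And>i. i \<in> A \<Longrightarrow> \<bar>f i\<bar> \<le> a * \<bar>g i\<bar> + b * \<bar>h i\<bar>" "a \<ge> 0" "b \<ge> 0"
  shows "L2_set f A \<le> a * L2_set g A + b * L2_set h A"
proof -
  have "L2_set f A = L2_set (\<lambda>i. \<bar>f i\<bar>) A" by (simp add: L2_abs)
  also have "\<dots> \<le> L2_set (\<lambda>i. a * \<bar>g i\<bar> + b * \<bar>h i\<bar>) A"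
    by (rule L2_set_mono) (use assms in auto)
  also have "\<dots> \<le> L2_set (\<lambda>i. a * \<bar>g i\<bar>) A + L2_set (\<lambda>i. b * \<bar>h i\<bar>) A"
    by (rule L2_set_triangle_ineq)
  also have "\<dots> = a * L2_set g A + b * L2_set h A"
    using assms by (simp add: L2_set_right_distrib[symmetric] L2_abs)
  finally show ?thesis .
qed

lemma x_deriv:
  assumes "tang m t0 zu dz du" "i < m"
  shows "((\<lambda>t. admm_x n m W y q (fst (zu t)) (snd (zu t)) i) has_real_derivative
          (\<Sum>j<m. W (q, 2, i, j) * (dz j - du j)) / sqrt (real m)) (at t0)"
proof -
  have d: "((\<lambda>t. fst (zu t) j - snd (zu t) j) has_real_derivative (dz j - du j)) (at t0)" if "j < m" for j
    using assms that unfolding tang_def by (intro DERIV_diff) auto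
  have "((\<lambda>t. (\<Sum>j<n. W (q, 1, i, j) * y j) / sqrt (real n)
     + (\<Sum>j<m. W (q, 2, i, j) * (fst (zu t) j - snd (zu t) j)) / sqrt (real m)) has_real_derivative
     0 + (\<Sum>j<m. W (q, 2, i, j) * (dz j - du j)) / sqrt (real m)) (at t0)"
    by (intro DERIV_add DERIV_const DERIV_cdivide DERIV_sum DERIV_cmult d) auto
  then show ?thesis unfolding admm_x_def by simp
qed

lemma layer_fst: "fst (admm_layer lam n m W y q zu) i = admm_sigma lam (admm_x n m W y q (fst zu) (snd zu) i + snd zu i)"
  by (simp add: admm_layer_def Let_def)

lemma layer_snd: "snd (admm_layer lam n m W y q zu) i = snd zu i + admm_x n m W y q (fst zu) (snd zu) i - fst (admm_layer lam n m W y q zu) i"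
  by (simp add: admm_layer_def Let_def)

definition lay_a :: "nat \<Rightarrow> (widx \<Rightarrow> real) \<Rightarrow> nat \<Rightarrow> (nat \<Rightarrow> real) \<Rightarrow> (nat \<Rightarrow> real) \<Rightarrow> nat \<Rightarrow> real" where "lay_a m W q dz du = (\<lambda>i. (\<Sum>j<m. W (q, 2, i, j) * (dz j - du j)) / sqrt (real m))"
definition lay_s where "lay_s lam n m W y q zu0 = (\<lambda>i. sd lam (admm_x n m W y q (fst zu0) (snd zu0) i + snd zu0 i))"

lemma layer_tang:
  assumes "tang m t0 zu dz du"
  shows "tang m t0 (\<lambda>t. admm_layer lam n m W y q (zu t))
     (\<lambda>i. lay_s lam n m W y q (zu t0) i * (lay_a m W q dz du i + du i))
     (\<lambda>i. du i + lay_a m W q dz du i - lay_s lam n m W y q (zu t0) i * (lay_a m W q dz du i + du i))"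
  unfolding tang_def
proof (intro allI impI conjI)
  fix i assume i: "i < m"
  have xd: "((\<lambda>t. admm_x n m W y q (fst (zu t)) (snd (zu t)) i + snd (zu t) i) has_real_derivative
      lay_a m W q dz du i + du i) (at t0)"
    using x_deriv[OF assms i] assms i unfolding tang_def lay_a_def by (intro DERIV_add) auto
  have fd: "((\<lambda>t. fst (admm_layer lam n m W y q (zu t)) i) has_real_derivative
      lay_s lam n m W y q (zu t0) i * (lay_a m W q dz du i + du i)) (at t0)"
    unfolding layer_fst lay_s_def
    by (rule DERIV_chain2[OF sigma_deriv xd])
  show "((\<lambda>t. fst (admm_layer lam n m W y q (zu t)) i) has_real_derivative
      lay_s lam n m W y q (zu t0) i * (lay_a m W q dz du i + du i)) (at t0)" by (rule fd)
  have "((\<lambda>t. snd (zu t) i + admm_x n m W y q (fst (zu t)) (snd (zu t)) i - fst (admm_layer lam n m W y q (zu t)) i)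
     has_real_derivative du i + lay_a m W q dz du i - lay_s lam n m W y q (zu t0) i * (lay_a m W q dz du i + du i)) (at t0)"
    using x_deriv[OF assms i] assms i fd unfolding tang_def lay_a_def by (intro DERIV_add DERIV_diff) auto
  then show "((\<lambda>t. snd (admm_layer lam n m W y q (zu t)) i) has_real_derivative
     du i + lay_a m W q dz du i - lay_s lam n m W y q (zu t0) i * (lay_a m W q dz du i + du i)) (at t0)"
    unfolding layer_snd .
qed

lemma lay_a_bound:
  assumes "opb m (\<lambda>i j. W (q, 2, i, j)) \<beta>" "\<beta> \<ge> 0"
  shows "L2_set (lay_a m W q dz du) {..<m} \<le> \<beta> / sqrt (real m) * (L2_set dz {..<m} + L2_set du {..<m})"
proof -
  have "L2_set (lay_a m W q dz du) {..<m} = L2_set (mv m (\<lambda>i j. W (q, 2, i, j)) (\<lambda>j. dz j - du j)) {..<m} * (1 / sqrt (real m))"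
    by (subst L2_set_left_distrib) (auto simp: lay_a_def mv_def)
  also have "\<dots> \<le> \<beta> * L2_set (\<lambda>j. dz j - du j) {..<m} * (1 / sqrt (real m))"
    using assms unfolding opb_def by (intro mult_right_mono) auto
  also have "L2_set (\<lambda>j. dz j - du j) {..<m} \<le> 1 * L2_set dz {..<m} + 1 * L2_set du {..<m}"
    by (rule L2_pw) auto
  then have "\<beta> * L2_set (\<lambda>j. dz j - du j) {..<m} * (1 / sqrt (real m)) \<le> \<beta> * (L2_set dz {..<m} + L2_set du {..<m}) * (1 / sqrt (real m))"
    using assms by (intro mult_right_mono mult_left_mono) auto
  finally show ?thesis by simp
qed

lemma fin_arith:
  fixes S1 S2 A D Z r :: real
  assumes "S1 \<le> 2 * A + 2 * D" "S2 \<le> 3 * A + 3 * D" "A \<le> r * (Z + D)" "0 \<le> Z" "0 \<le> D"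
  shows "S1 + S2 \<le> 5 * (r + 1) * (Z + D)"
proof -
  have "5 * (r + 1) * (Z + D) = 5 * (r * (Z + D)) + 5 * Z + 5 * D" by (simp add: algebra_simps)
  then show ?thesis using assms by linarith
qed

lemma layer_bound:
  assumes "opb m (\<lambda>i j. W (q, 2, i, j)) \<beta>" "\<beta> \<ge> 0"
  shows "L2_set (\<lambda>i. lay_s lam n m W y q zu0 i * (lay_a m W q dz du i + du i)) {..<m}
       + L2_set (\<lambda>i. du i + lay_a m W q dz du i - lay_s lam n m W y q zu0 i * (lay_a m W q dz du i + du i)) {..<m}
     \<le> 5 * (\<beta> / sqrt (real m) + 1) * (L2_set dz {..<m} + L2_set du {..<m})"
proof -
  let ?a = "lay_a m W q dz du" and ?s = "lay_s lam n m W y q zu0"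
  have sb: "\<bar>?s i\<bar> \<le> 2" for i unfolding lay_s_def by (rule sd_bound)
  have p1: "\<bar>?s i * (?a i + du i)\<bar> \<le> 2 * \<bar>?a i\<bar> + 2 * \<bar>du i\<bar>" for i
  proof -
    have "\<bar>?s i * (?a i + du i)\<bar> = \<bar>?s i\<bar> * \<bar>?a i + du i\<bar>" by (simp add: abs_mult)
    also have "\<dots> \<le> 2 * \<bar>?a i + du i\<bar>" using sb[of i] by (intro mult_right_mono) auto
    also have "\<dots> \<le> 2 * \<bar>?a i\<bar> + 2 * \<bar>du i\<bar>" by (smt (verit) abs_triangle_ineq)
    finally show ?thesis .
  qed
  have p2: "\<bar>du i + ?a i - ?s i * (?a i + du i)\<bar> \<le> 3 * \<bar>?a i\<bar> + 3 * \<bar>du i\<bar>" for i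
    using p1[of i] by linarith
  have "L2_set (\<lambda>i. ?s i * (?a i + du i)) {..<m} \<le> 2 * L2_set ?a {..<m} + 2 * L2_set du {..<m}"
    by (rule L2_pw[OF p1]) auto
  moreover have "L2_set (\<lambda>i. du i + ?a i - ?s i * (?a i + du i)) {..<m} \<le> 3 * L2_set ?a {..<m} + 3 * L2_set du {..<m}"
    by (rule L2_pw[OF p2]) auto
  moreover note lay_a_bound[OF assms, of dz du]
  moreover have "0 \<le> L2_set dz {..<m}" "0 \<le> L2_set du {..<m}" by simp_all
  ultimately show ?thesis by (rule fin_arith)
qed

lemma steps_tang:
  assumes "tang m t0 zu dz du"
  shows "\<exists>dz' du'. tang m t0 (\<lambda>t. admm_steps lam n m W y l k (zu t)) dz' du' \<and>
   (\<forall>\<beta>. \<beta> \<ge> 0 \<longrightarrow> (\<forall>q. l < q \<and> q \<le> l + k \<longrightarrow> opb m (\<lambda>i j. W (q, 2, i, j)) \<beta>) \<longrightarrow>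
     L2_set dz' {..<m} + L2_set du' {..<m} \<le> (5 * (\<beta> / sqrt (real m) + 1)) ^ k * (L2_set dz {..<m} + L2_set du {..<m}))"
  using assms
proof (induction k arbitrary: l zu dz du)
  case 0
  then show ?case by (intro exI[of _ dz] exI[of _ du]) auto
next
  case (Suc k)
  let ?zu1 = "\<lambda>t. admm_layer lam n m W y (Suc l) (zu t)"
  let ?dz1 = "\<lambda>i. lay_s lam n m W y (Suc l) (zu t0) i * (lay_a m W (Suc l) dz du i + du i)"
  let ?du1 = "\<lambda>i. du i + lay_a m W (Suc l) dz du i - lay_s lam n m W y (Suc l) (zu t0) i * (lay_a m W (Suc l) dz du i + du i)"
  have t1: "tang m t0 ?zu1 ?dz1 ?du1" by (rule layer_tang[OF Suc.prems])
  obtain dz' du' where t2: "tang m t0 (\<lambda>t. admm_steps lam n m W y (Suc l) k (?zu1 t)) dz' du'"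
    and b2: "\<forall>\<beta>. \<beta> \<ge> 0 \<longrightarrow> (\<forall>q. Suc l < q \<and> q \<le> Suc l + k \<longrightarrow> opb m (\<lambda>i j. W (q, 2, i, j)) \<beta>) \<longrightarrow>
     L2_set dz' {..<m} + L2_set du' {..<m} \<le> (5 * (\<beta> / sqrt (real m) + 1)) ^ k * (L2_set ?dz1 {..<m} + L2_set ?du1 {..<m})"
    using Suc.IH[OF t1] by blast
  show ?case
  proof (rule exI[of _ dz'], rule exI[of _ du'], rule conjI)
    show "tang m t0 (\<lambda>t. admm_steps lam n m W y l (Suc k) (zu t)) dz' du'" using t2 by simp
  next
    show "\<forall>\<beta>. \<beta> \<ge> 0 \<longrightarrow> (\<forall>q. l < q \<and> q \<le> l + Suc k \<longrightarrow> opb m (\<lambda>i j. W (q, 2, i, j)) \<beta>) \<longrightarrow>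
     L2_set dz' {..<m} + L2_set du' {..<m} \<le> (5 * (\<beta> / sqrt (real m) + 1)) ^ Suc k * (L2_set dz {..<m} + L2_set du {..<m})"
    proof (intro allI impI)
    fix \<beta> :: real assume b0: "\<beta> \<ge> 0" and op: "\<forall>q. l < q \<and> q \<le> l + Suc k \<longrightarrow> opb m (\<lambda>i j. W (q, 2, i, j)) \<beta>"
    let ?K = "5 * (\<beta> / sqrt (real m) + 1)"
    have K0: "?K \<ge> 0" using b0 by simp
    have "L2_set dz' {..<m} + L2_set du' {..<m} \<le> ?K ^ k * (L2_set ?dz1 {..<m} + L2_set ?du1 {..<m})"
      using b2 b0 op by auto
    also have "\<dots> \<le> ?K ^ k * (?K * (L2_set dz {..<m} + L2_set du {..<m}))"
      by (intro mult_left_mono layer_bound b0 zero_le_power K0) (use op in auto)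
    finally show "L2_set dz' {..<m} + L2_set du' {..<m} \<le> ?K ^ Suc k * (L2_set dz {..<m} + L2_set du {..<m})"
      by (simp add: mult.assoc mult.commute mult.left_commute)
    qed
  qed
qed

lemma L2_unit: "(j::nat) < m \<Longrightarrow> L2_set (\<lambda>i. if i = j then 1 else 0) {..<m} = 1"
proof -
  assume j: "j < m"
  have "(\<Sum>i<m. (if i = j then 1 else (0::real))\<^sup>2) = (\<Sum>i<m. if i = j then 1 else 0)"
    by (intro sum.cong) auto
  also have "\<dots> = 1" using j by (subst sum.delta) auto
  finally show ?thesis unfolding L2_set_def by simp
qed

lemma L2_unit': "(j::nat) < m \<Longrightarrow> L2_set (\<lambda>i. - (if i = j then 1 else 0)) {..<m} = 1"
  using L2_unit[of j m] unfolding L2_set_def by simp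

lemma b_main:
  fixes lam :: real and n :: nat and W :: "widx \<Rightarrow> real" and y z0 u0 :: "nat \<Rightarrow> real"
  assumes "j < m" "s < m" "l \<le> L"
  defines "zl \<equiv> fst (admm_state lam n m W y z0 u0 l)"
  shows "\<exists>D. ((\<lambda>t. admm_out_from lam L n m W y z0 u0 l s (zl(j:=t))) has_real_derivative D) (at (zl j)) \<and>
     (\<forall>\<beta>. \<beta> \<ge> 0 \<longrightarrow> (\<forall>q. l < q \<and> q \<le> L \<longrightarrow> opb m (\<lambda>i j. W (q, 2, i, j)) \<beta>) \<longrightarrow>
        \<bar>D\<bar> \<le> 2 * (5 * (\<beta> / sqrt (real m) + 1)) ^ (L - l) / sqrt (real m))"
proof -
  define prev where "prev = admm_state lam n m W y z0 u0 (l - 1)"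
  define x where "x = admm_x n m W y l (fst prev) (snd prev)"
  define zu where "zu = (\<lambda>t. (zl(j:=t), (\<lambda>i. snd prev i + x i - (zl(j:=t)) i)))"
  define e where "e = (\<lambda>i::nat. if i = j then (1::real) else 0)"
  have out: "admm_out_from lam L n m W y z0 u0 l s (zl(j:=t)) = fst (admm_steps lam n m W y l (L - l) (zu t)) s / sqrt (real m)" for t
    unfolding admm_out_from_def zu_def prev_def x_def Let_def by simp
  have tg: "tang m (zl j) zu e (\<lambda>i. - e i)"
    unfolding tang_def
  proof (intro allI impI conjI)
    fix i assume "i < m"
    show d1: "((\<lambda>t. fst (zu t) i) has_real_derivative e i) (at (zl j))"
      by (cases "i = j") (auto simp: zu_def e_def)
    have "((\<lambda>t. snd prev i + x i - fst (zu t) i) has_real_derivative 0 + 0 - e i) (at (zl j))"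
      by (intro DERIV_diff DERIV_add DERIV_const d1)
    then show "((\<lambda>t. snd (zu t) i) has_real_derivative - e i) (at (zl j))"
      by (simp add: zu_def)
  qed
  obtain dz' du' where t2: "tang m (zl j) (\<lambda>t. admm_steps lam n m W y l (L - l) (zu t)) dz' du'"
    and b2: "\<forall>\<beta>. \<beta> \<ge> 0 \<longrightarrow> (\<forall>q. l < q \<and> q \<le> l + (L - l) \<longrightarrow> opb m (\<lambda>i j. W (q, 2, i, j)) \<beta>) \<longrightarrow>
     L2_set dz' {..<m} + L2_set du' {..<m} \<le> (5 * (\<beta> / sqrt (real m) + 1)) ^ (L - l) * (L2_set e {..<m} + L2_set (\<lambda>i. - e i) {..<m})"
    using steps_tang[OF tg, of lam n W y l "L - l"] by blast
  have "((\<lambda>t. fst (admm_steps lam n m W y l (L - l) (zu t)) s / sqrt (real m)) has_real_derivative dz' s / sqrt (real m)) (at (zl j))"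
    using t2 assms unfolding tang_def by (intro DERIV_cdivide) auto
  then have der: "((\<lambda>t. admm_out_from lam L n m W y z0 u0 l s (zl(j:=t))) has_real_derivative dz' s / sqrt (real m)) (at (zl j))"
    unfolding out .
  show ?thesis
  proof (intro exI[of _ "dz' s / sqrt (real m)"] conjI der allI impI)
    fix \<beta> :: real assume b0: "\<beta> \<ge> 0" and op: "\<forall>q. l < q \<and> q \<le> L \<longrightarrow> opb m (\<lambda>i j. W (q, 2, i, j)) \<beta>"
    have e1: "L2_set e {..<m} = 1" "L2_set (\<lambda>i. - e i) {..<m} = 1"
      using L2_unit[OF assms(1)] L2_unit'[OF assms(1)] unfolding e_def by auto
    have "\<bar>dz' s\<bar> \<le> L2_set dz' {..<m}"
      using member_le_L2_set[of "{..<m}" s "\<lambda>i. \<bar>dz' i\<bar>"] assms by (simp add: L2_abs)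
    also have "\<dots> \<le> L2_set dz' {..<m} + L2_set du' {..<m}" by simp
    also have "\<dots> \<le> 2 * (5 * (\<beta> / sqrt (real m) + 1)) ^ (L - l)"
      using b2 b0 op assms(3) e1 by auto
    finally show "\<bar>dz' s / sqrt (real m)\<bar> \<le> 2 * (5 * (\<beta> / sqrt (real m) + 1)) ^ (L - l) / sqrt (real m)"
      by (simp add: divide_right_mono)
  qed
qed

lemma b_deriv:
  assumes "j < m" "s < m" "l \<le> L"
  shows "((\<lambda>t. admm_out_from lam L n m W y z0 u0 l s ((fst (admm_state lam n m W y z0 u0 l))(j:=t))) has_real_derivative
     admm_b lam L n m W y z0 u0 l s j) (at (fst (admm_state lam n m W y z0 u0 l) j))"
proof -
  obtain D where D: "((\<lambda>t. admm_out_from lam L n m W y z0 u0 l s ((fst (admm_state lam n m W y z0 u0 l))(j:=t))) has_real_derivative D) (at (fst (admm_state lam n m W y z0 u0 l) j))"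
    using b_main[OF assms] by blast
  then show ?thesis unfolding admm_b_def Let_def using DERIV_imp_deriv[OF D] by simp
qed

lemma b_bound:
  assumes "j < m" "s < m" "l \<le> L" "\<beta> \<ge> 0" "\<forall>q. l < q \<and> q \<le> L \<longrightarrow> opb m (\<lambda>i j. W (q, 2, i, j)) \<beta>"
  shows "\<bar>admm_b lam L n m W y z0 u0 l s j\<bar> \<le> 2 * (5 * (\<beta> / sqrt (real m) + 1)) ^ (L - l) / sqrt (real m)"
proof -
  obtain D where D: "((\<lambda>t. admm_out_from lam L n m W y z0 u0 l s ((fst (admm_state lam n m W y z0 u0 l))(j:=t))) has_real_derivative D) (at (fst (admm_state lam n m W y z0 u0 l) j))"
    and B: "\<bar>D\<bar> \<le> 2 * (5 * (\<beta> / sqrt (real m) + 1)) ^ (L - l) / sqrt (real m)"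
    using b_main[OF assms(1-3), of lam n W y z0 u0] assms(4,5) by blast
  have "admm_b lam L n m W y z0 u0 l s j = D" unfolding admm_b_def Let_def using DERIV_imp_deriv[OF D] by simp
  then show ?thesis using B by simp
qed

lemma deriv_seq:
  assumes "(f has_real_derivative D) (at x)"
  shows "(\<lambda>k. (f (x + inverse (real (Suc k))) - f x) / inverse (real (Suc k))) \<longlonglongrightarrow> D"
proof -
  have lim: "(\<lambda>h. (f (x + h) - f x) / h) \<midarrow>0\<rightarrow> D" using assms by (simp add: DERIV_def)
  have fl: "filterlim (\<lambda>k. inverse (real (Suc k))) (at 0) sequentially"
    unfolding filterlim_at using LIMSEQ_inverse_real_of_nat by auto
  show ?thesis using filterlim_compose[OF lim fl] by (simp add: o_def)
qed

lemma sigma_meas[measurable]: "admm_sigma lam \<in> borel_measurable borel"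
  unfolding admm_sigma_def by measurable

context
  fixes M :: "(widx \<Rightarrow> real) measure"
  assumes coord[measurable]: "\<And>k. (\<lambda>W. W k) \<in> borel_measurable M"
begin

lemma x_meas:
  assumes [measurable]: "\<And>i. (\<lambda>W. Z W i) \<in> borel_measurable M" "\<And>i. (\<lambda>W. U W i) \<in> borel_measurable M"
  shows "(\<lambda>W. admm_x n m W y q (Z W) (U W) i) \<in> borel_measurable M"
  unfolding admm_x_def by measurable

lemma layer_meas:
  assumes [measurable]: "\<And>i. (\<lambda>W. fst (zu W) i) \<in> borel_measurable M" "\<And>i. (\<lambda>W. snd (zu W) i) \<in> borel_measurable M"
  shows "(\<lambda>W. fst (admm_layer lam n m W y q (zu W)) i) \<in> borel_measurable M \<and>
         (\<lambda>W. snd (admm_layer lam n m W y q (zu W)) i) \<in> borel_measurable M"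
proof -
  note xm[measurable] = x_meas[of "\<lambda>W. fst (zu W)" "\<lambda>W. snd (zu W)"]
  have 1: "(\<lambda>W. fst (admm_layer lam n m W y q (zu W)) i) \<in> borel_measurable M"
    unfolding layer_fst by measurable
  note 1[measurable]
  have 2: "(\<lambda>W. snd (admm_layer lam n m W y q (zu W)) i) \<in> borel_measurable M"
    unfolding layer_snd by measurable
  show ?thesis using 1 2 by simp
qed

lemma steps_meas:
  assumes "\<And>i. (\<lambda>W. fst (zu W) i) \<in> borel_measurable M" "\<And>i. (\<lambda>W. snd (zu W) i) \<in> borel_measurable M"
  shows "(\<lambda>W. fst (admm_steps lam n m W y l k (zu W)) i) \<in> borel_measurable M \<and>
         (\<lambda>W. snd (admm_steps lam n m W y l k (zu W)) i) \<in> borel_measurable M"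
  using assms
proof (induction k arbitrary: l zu i)
  case 0
  then show ?case by simp
next
  case (Suc k)
  have "\<And>i. (\<lambda>W. fst (admm_layer lam n m W y (Suc l) (zu W)) i) \<in> borel_measurable M"
       "\<And>i. (\<lambda>W. snd (admm_layer lam n m W y (Suc l) (zu W)) i) \<in> borel_measurable M"
    using layer_meas[OF Suc.prems] by auto
  from Suc.IH[OF this] show ?case by simp
qed

lemma state_meas:
  "(\<lambda>W. fst (admm_state lam n m W y z0 u0 l) i) \<in> borel_measurable M \<and>
   (\<lambda>W. snd (admm_state lam n m W y z0 u0 l) i) \<in> borel_measurable M"
  unfolding admm_state_def by (rule steps_meas) auto

lemma out_meas:
  assumes [measurable]: "\<And>i. (\<lambda>W. Z W i) \<in> borel_measurable M"
  shows "(\<lambda>W. admm_out_from lam L n m W y z0 u0 l s (Z W)) \<in> borel_measurable M"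
proof -
  note sm[measurable] = state_meas[THEN conjunct1] state_meas[THEN conjunct2]
  note xm[measurable] = x_meas[of "\<lambda>W. fst (admm_state lam n m W y z0 u0 (l - 1))" "\<lambda>W. snd (admm_state lam n m W y z0 u0 (l - 1))"]
  have "(\<lambda>W. fst (admm_steps lam n m W y l (L - l) (Z W,
     \<lambda>i. snd (admm_state lam n m W y z0 u0 (l - 1)) i + admm_x n m W y l (fst (admm_state lam n m W y z0 u0 (l - 1))) (snd (admm_state lam n m W y z0 u0 (l - 1))) i - Z W i)) s)
     \<in> borel_measurable M"
  proof (rule steps_meas[THEN conjunct1])
    fix i
    show "(\<lambda>W. fst (Z W,
     \<lambda>i. snd (admm_state lam n m W y z0 u0 (l - 1)) i + admm_x n m W y l (fst (admm_state lam n m W y z0 u0 (l - 1))) (snd (admm_state lam n m W y z0 u0 (l - 1))) i - Z W i) i)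
     \<in> borel_measurable M" by simp
    show "(\<lambda>W. snd (Z W,
     \<lambda>i. snd (admm_state lam n m W y z0 u0 (l - 1)) i + admm_x n m W y l (fst (admm_state lam n m W y z0 u0 (l - 1))) (snd (admm_state lam n m W y z0 u0 (l - 1))) i - Z W i) i)
     \<in> borel_measurable M" unfolding snd_conv by (intro borel_measurable_diff borel_measurable_add sm xm assms)
  qed
  then show ?thesis unfolding admm_out_from_def Let_def by measurable
qed

lemma b_meas:
  assumes "j < m" "s < m" "l \<le> L"
  shows "(\<lambda>W. admm_b lam L n m W y z0 u0 l s j) \<in> borel_measurable M"
proof (rule borel_measurable_LIMSEQ_real)
  let ?zl = "\<lambda>W. fst (admm_state lam n m W y z0 u0 l)"
  let ?F = "\<lambda>W t. admm_out_from lam L n m W y z0 u0 l s ((?zl W)(j := t))"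
  fix W
  show "(\<lambda>k. (?F W (?zl W j + inverse (real (Suc k))) - ?F W (?zl W j)) / inverse (real (Suc k)))
      \<longlonglongrightarrow> admm_b lam L n m W y z0 u0 l s j"
    by (rule deriv_seq[OF b_deriv[OF assms]])
next
  let ?zl = "\<lambda>W. fst (admm_state lam n m W y z0 u0 l)"
  let ?F = "\<lambda>W t. admm_out_from lam L n m W y z0 u0 l s ((?zl W)(j := t))"
  fix k
  note sm[measurable] = state_meas[THEN conjunct1]
  have a: "(\<lambda>W. ?F W (?zl W j + c)) \<in> borel_measurable M" for c
    by (rule out_meas) (auto simp: fun_upd_def)
  have b: "(\<lambda>W. ?F W (?zl W j)) \<in> borel_measurable M"
    using a[of 0] by simp
  show "(\<lambda>W. (?F W (?zl W j + inverse (real (Suc k))) - ?F W (?zl W j)) / inverse (real (Suc k))) \<in> borel_measurable M"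
    using a b by measurable
qed

lemma supnorm_meas:
  assumes "s < m" "l \<le> L"
  shows "(\<lambda>W. admm_b_supnorm lam L n m W y z0 u0 l s) \<in> borel_measurable M"
  unfolding admm_b_supnorm_def
  by (rule borel_measurable_Max) (auto intro!: borel_measurable_abs b_meas assms)

end

abbreviation NN :: "real measure" where "NN \<equiv> density lborel (\<lambda>x. ennreal (std_normal_density x))"

lemma prob_NN: "prob_space NN" by (rule prob_space_normal_density) simp

lemma sets_NN[simp]: "sets NN = sets borel" by simp
lemma space_NN[simp]: "space NN = UNIV" by simp

lemma prob_init: "prob_space (init_measure L n m)"
  unfolding init_measure_def by (intro prob_space_PiM prob_NN)

lemma space_init: "space (init_measure L n m) = PiE (weight_idx L n m) (\<lambda>_. UNIV)"
  unfolding init_measure_def by (simp add: space_PiM)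

lemma coord_meas: "(\<lambda>W. W k) \<in> borel_measurable (init_measure L n m)"
proof (cases "k \<in> weight_idx L n m")
  case True
  have 1: "(\<lambda>W. W k) \<in> measurable (init_measure L n m) NN"
    unfolding init_measure_def by (rule measurable_component_singleton[OF True])
  have 2: "measurable (init_measure L n m) NN = borel_measurable (init_measure L n m)"
    by (rule measurable_cong_sets) (rule refl, rule sets_NN)
  show ?thesis using 1 unfolding 2 .
next
  case False
  have eq: "W k = undefined" if "W \<in> space (init_measure L n m)" for W
  proof -
    have "W \<in> extensional (weight_idx L n m)" using that unfolding space_init PiE_def by blast
    then show ?thesis using False by (rule extensional_arb)
  qed
  have "(\<lambda>W. undefined) \<in> borel_measurable (init_measure L n m)" by (rule measurable_const) simp
  then show ?thesis using measurable_cong[of "init_measure L n m" "\<lambda>W. W k" "\<lambda>W. undefined"] eq by blast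
qed

lemma coord_distr:
  assumes "k \<in> weight_idx L n m"
  shows "distr (init_measure L n m) borel (\<lambda>W. W k) = NN"
proof -
  have "distr (init_measure L n m) borel (\<lambda>W. W k) = distr (init_measure L n m) NN (\<lambda>W. W k)"
    by (rule distr_cong[OF refl]) (simp_all only: sets_NN)
  also have "\<dots> = NN" unfolding init_measure_def
    by (rule product_prob_space.PiM_component[OF _ assms]) (simp add: product_prob_space_def product_sigma_finite_def prob_NN prob_space_imp_sigma_finite product_prob_space_axioms_def)
  finally show ?thesis .
qed

lemma coord_distributed:
  assumes "k \<in> weight_idx L n m"
  shows "distributed (init_measure L n m) lborel (\<lambda>W. W k) (\<lambda>x. ennreal (std_normal_density x))"
  unfolding distributed_def
proof (intro conjI)
  have "distr (init_measure L n m) lborel (\<lambda>W. W k) = distr (init_measure L n m) borel (\<lambda>W. W k)"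
    by (rule distr_cong[OF refl]) simp_all
  then show "distr (init_measure L n m) lborel (\<lambda>W. W k) = NN" using coord_distr[OF assms] by simp
  have "borel_measurable (init_measure L n m) = measurable (init_measure L n m) lborel"
    by (rule measurable_cong_sets) simp_all
  then show "(\<lambda>W. W k) \<in> measurable (init_measure L n m) lborel"
    using coord_meas by simp
qed simp

lemma coord_indep:
  assumes "weight_idx L n m \<noteq> {}"
  shows "prob_space.indep_vars (init_measure L n m) (\<lambda>_. borel) (\<lambda>k W. W k) (weight_idx L n m)"
proof -
  interpret P: prob_space "init_measure L n m" by (rule prob_init)
  let ?I = "weight_idx L n m"
  have "distr (init_measure L n m) (PiM ?I (\<lambda>_. borel)) (\<lambda>x. \<lambda>i\<in>?I. x i)
      = distr (init_measure L n m) (init_measure L n m) (\<lambda>x. x)"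
  proof (rule distr_cong[OF refl])
    show "sets (PiM ?I (\<lambda>_. borel)) = sets (init_measure L n m)"
      unfolding init_measure_def by (rule sets_PiM_cong) simp_all
    fix x assume "x \<in> space (init_measure L n m)"
    then show "(\<lambda>i\<in>?I. x i) = x" unfolding space_init by (rule PiE_restrict)
  qed
  also have "\<dots> = init_measure L n m" by (rule distr_id)
  also have "\<dots> = PiM ?I (\<lambda>i. distr (init_measure L n m) borel (\<lambda>W. W i))"
    unfolding init_measure_def[of L n m] by (rule PiM_cong[OF refl]) (simp only: coord_distr[unfolded init_measure_def])
  finally have eq: "distr (init_measure L n m) (PiM ?I (\<lambda>_. borel)) (\<lambda>x. \<lambda>i\<in>?I. x i) = PiM ?I (\<lambda>i. distr (init_measure L n m) borel (\<lambda>W. W i))" .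
  show ?thesis
    by (rule P.indep_vars_iff_distr_eq_PiM'[OF assms, THEN iffD2]) (rule coord_meas, rule eq)
qed

definition rowX :: "nat \<Rightarrow> nat \<Rightarrow> (nat \<Rightarrow> real) \<Rightarrow> nat \<Rightarrow> (widx \<Rightarrow> real) \<Rightarrow> real" where
  "rowX m p c i W = (\<Sum>j<m. W (p, 2, i, j) * c j)"

lemma widx_mem: "1 \<le> p \<Longrightarrow> p \<le> L \<Longrightarrow> i < m \<Longrightarrow> j < m \<Longrightarrow> (p, 2, i, j) \<in> weight_idx L n m"
  by (simp add: weight_idx_def)

lemma row_indep:
  assumes "1 \<le> p" "p \<le> L" "0 < m"
  shows "prob_space.indep_vars (init_measure L n m) (\<lambda>_. borel) (rowX m p c) {..<m}"
proof -
  interpret P: prob_space "init_measure L n m" by (rule prob_init)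
  let ?I = "weight_idx L n m"
  define K where "K = (\<lambda>i::nat. (\<lambda>j. (p, 2::nat, i, j)) ` {..<m})"
  have ne: "?I \<noteq> {}" using widx_mem[OF assms(1,2) assms(3) assms(3)] by blast
  have KI: "K i \<subseteq> ?I" if "i \<in> {..<m}" for i
    using widx_mem[OF assms(1,2)] that unfolding K_def by auto
  have dj: "disjoint_family_on K {..<m}" unfolding K_def disjoint_family_on_def by auto
  have ir: "P.indep_vars (\<lambda>i. PiM (K i) (\<lambda>_. borel)) (\<lambda>i \<omega>. restrict (\<lambda>k. \<omega> k) (K i)) {..<m}"
    by (rule P.indep_vars_restrict[OF coord_indep[OF ne] KI dj])
  define Y where "Y = (\<lambda>i (r :: widx \<Rightarrow> real). \<Sum>j<m. r (p, 2, i, j) * c j)"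
  have Ym: "Y i \<in> borel_measurable (PiM (K i) (\<lambda>_. borel))" if "i \<in> {..<m}" for i
  proof -
    have "(\<lambda>r. r (p, 2, i, j)) \<in> borel_measurable (PiM (K i) (\<lambda>_. borel))" if "j < m" for j
      by (rule measurable_component_singleton) (use that in \<open>simp add: K_def\<close>)
    then show ?thesis unfolding Y_def by (intro borel_measurable_sum borel_measurable_times) auto
  qed
  have "P.indep_vars (\<lambda>_. borel) (\<lambda>i \<omega>. Y i (restrict (\<lambda>k. \<omega> k) (K i))) {..<m}"
    by (rule P.indep_vars_compose2[OF ir Ym])
  moreover have "(\<lambda>\<omega>. Y i (restrict (\<lambda>k. \<omega> k) (K i))) = rowX m p c i" for i
    unfolding Y_def rowX_def K_def by (auto intro!: sum.cong)
  ultimately show ?thesis by simp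
qed

lemma row_normal:
  assumes "1 \<le> p" "p \<le> L" "i < m" "(\<Sum>j<m. (c j)\<^sup>2) = 1"
  shows "distributed (init_measure L n m) lborel (rowX m p c i) (\<lambda>x. ennreal (std_normal_density x))"
proof -
  interpret P: prob_space "init_measure L n m" by (rule prob_init)
  let ?I = "weight_idx L n m"
  define J where "J = {j. j < m \<and> c j \<noteq> 0}"
  define K where "K = (\<lambda>j. (p, 2::nat, i, j)) ` J"
  define cc where "cc = (\<lambda>k::widx. c (snd (snd (snd k))))"
  have ne: "?I \<noteq> {}" using widx_mem[OF assms(1,2) assms(3) assms(3)] by blast
  have finJ: "finite J" unfolding J_def by auto
  have JK: "J \<noteq> {}"
  proof
    assume "J = {}"
    then have "(\<Sum>j<m. (c j)\<^sup>2) = 0" by (intro sum.neutral) (auto simp: J_def)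
    then show False using assms(4) by simp
  qed
  have KI: "K \<subseteq> ?I" unfolding K_def J_def using widx_mem[OF assms(1,2) assms(3)] by auto
  have inj: "inj_on (\<lambda>j. (p, 2::nat, i, j)) J" by (auto intro: inj_onI)
  have finK: "finite K" "K \<noteq> {}" unfolding K_def using finJ JK by auto
  have ccK: "cc k \<noteq> 0" if "k \<in> K" for k using that unfolding K_def J_def cc_def by auto
  have ind: "P.indep_vars (\<lambda>_. borel) (\<lambda>k W. 0 + cc k * W k) K"
    by (rule P.indep_vars_compose2[OF P.indep_vars_subset[OF coord_indep[OF ne] KI]]) simp
  have nd: "distributed (init_measure L n m) lborel (\<lambda>W. 0 + cc k * W k) (\<lambda>x. ennreal (normal_density (0 + cc k * 0) (\<bar>cc k\<bar> * 1) x))"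
    if "k \<in> K" for k
    by (rule P.normal_density_affine[OF coord_distributed]) (use that KI ccK in auto)
  have "distributed (init_measure L n m) lborel (\<lambda>W. \<Sum>k\<in>K. 0 + cc k * W k)
     (\<lambda>x. ennreal (normal_density (\<Sum>k\<in>K. 0) (sqrt (\<Sum>k\<in>K. (\<bar>cc k\<bar> * 1)\<^sup>2)) x))"
    by (rule P.sum_indep_normal[OF finK ind]) (use nd ccK in auto)
  moreover have "(\<Sum>k\<in>K. (\<bar>cc k\<bar> * 1)\<^sup>2) = 1"
  proof -
    have "(\<Sum>k\<in>K. (\<bar>cc k\<bar> * 1)\<^sup>2) = (\<Sum>j\<in>J. (c j)\<^sup>2)"
      unfolding K_def by (subst sum.reindex[OF inj]) (simp add: cc_def)
    also have "\<dots> = (\<Sum>j<m. (c j)\<^sup>2)"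
      by (rule sum.mono_neutral_left) (auto simp: J_def)
    finally show ?thesis using assms(4) by simp
  qed
  moreover have "(\<lambda>W. \<Sum>k\<in>K. 0 + cc k * W k) = rowX m p c i"
  proof
    fix W
    have "(\<Sum>k\<in>K. 0 + cc k * W k) = (\<Sum>j\<in>J. W (p, 2, i, j) * c j)"
      unfolding K_def by (subst sum.reindex[OF inj]) (simp add: cc_def mult.commute)
    also have "\<dots> = rowX m p c i W" unfolding rowX_def
      by (rule sum.mono_neutral_left) (auto simp: J_def)
    finally show "(\<Sum>k\<in>K. 0 + cc k * W k) = rowX m p c i W" .
  qed
  ultimately show ?thesis by simp
qed

lemma dens_id: "std_normal_density x * exp (x\<^sup>2 / 4) = sqrt 2 * normal_density 0 (sqrt 2) x"
proof -
  have e: "exp (- x\<^sup>2 / 2) * exp (x\<^sup>2 / 4) = exp (- x\<^sup>2 / 4)" by (simp flip: exp_add)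
  have s: "sqrt (2 * pi * 2) = sqrt 2 * sqrt (2 * pi)" by (simp add: real_sqrt_mult)
  have "std_normal_density x * exp (x\<^sup>2 / 4) = (1 / sqrt (2 * pi)) * (exp (- x\<^sup>2 / 2) * exp (x\<^sup>2 / 4))"
    by (simp add: std_normal_density_def)
  also have "\<dots> = (1 / sqrt (2 * pi)) * exp (- x\<^sup>2 / 4)" by (simp only: e)
  also have "\<dots> = sqrt 2 * (1 / sqrt (2 * (2 * pi)) * exp (- x\<^sup>2 / 4))"
    unfolding real_sqrt_mult[of 2 "2 * pi"] by simp
  also have "\<dots> = sqrt 2 * normal_density 0 (sqrt 2) x"
    by (simp add: normal_density_def mult.assoc)
  finally show ?thesis .
qed

lemma mgf_std:
  assumes "distributed M lborel X (\<lambda>x. ennreal (std_normal_density x))"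
  shows "(\<integral>\<^sup>+\<omega>. ennreal (exp ((X \<omega>)\<^sup>2 / 4)) \<partial>M) = ennreal (sqrt 2)"
proof -
  have "(\<integral>\<^sup>+\<omega>. ennreal (exp ((X \<omega>)\<^sup>2 / 4)) \<partial>M) = (\<integral>\<^sup>+x. ennreal (std_normal_density x) * ennreal (exp (x\<^sup>2 / 4)) \<partial>lborel)"
    by (rule distributed_nn_integral[OF assms, symmetric]) simp
  also have "\<dots> = (\<integral>\<^sup>+x. ennreal (sqrt 2) * ennreal (normal_density 0 (sqrt 2) x) \<partial>lborel)"
    by (intro nn_integral_cong) (simp add: dens_id ennreal_mult'[symmetric] ennreal_mult[symmetric])
  also have "\<dots> = ennreal (sqrt 2) * (\<integral>\<^sup>+x. ennreal (normal_density 0 (sqrt 2) x) \<partial>lborel)"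
    by (rule nn_integral_cmult) simp
  also have "(\<integral>\<^sup>+x. ennreal (normal_density 0 (sqrt 2) x) \<partial>lborel) = 1"
    by (subst nn_integral_eq_integral) (auto simp: normal_density_nonneg)
  finally show ?thesis by simp
qed

lemma row_chernoff:
  assumes "1 \<le> p" "p \<le> L" "0 < m" "(\<Sum>j<m. (c j)\<^sup>2) = 1"
  shows "measure (init_measure L n m) {W \<in> space (init_measure L n m). a \<le> (\<Sum>i<m. (rowX m p c i W)\<^sup>2)}
     \<le> exp (- a / 4) * sqrt 2 ^ m"
proof -
  let ?M = "init_measure L n m"
  interpret P: prob_space ?M by (rule prob_init)
  note cm[measurable] = coord_meas[of _ L n m]
  have rm[measurable]: "rowX m p c i \<in> borel_measurable ?M" for i
    unfolding rowX_def by measurable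
  have ind: "P.indep_vars (\<lambda>_. borel) (\<lambda>i W. ennreal (exp ((rowX m p c i W)\<^sup>2 / 4))) {..<m}"
    by (rule P.indep_vars_compose2[OF row_indep[OF assms(1-3)]]) simp
  have "emeasure ?M {W \<in> space ?M. a \<le> (\<Sum>i<m. (rowX m p c i W)\<^sup>2)}
     \<le> ennreal (exp (- (1/4) * a)) * (\<integral>\<^sup>+W. ennreal (exp ((1/4) * (\<Sum>i<m. (rowX m p c i W)\<^sup>2))) * indicator (space ?M) W \<partial>?M)"
    by (rule Chernoff_ineq_nn_integral_ge) auto
  also have "(\<integral>\<^sup>+W. ennreal (exp ((1/4) * (\<Sum>i<m. (rowX m p c i W)\<^sup>2))) * indicator (space ?M) W \<partial>?M)
      = (\<integral>\<^sup>+W. (\<Prod>i<m. ennreal (exp ((rowX m p c i W)\<^sup>2 / 4))) \<partial>?M)"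
  proof (rule nn_integral_cong)
    fix W assume "W \<in> space ?M"
    have "exp ((1/4) * (\<Sum>i<m. (rowX m p c i W)\<^sup>2)) = (\<Prod>i<m. exp ((rowX m p c i W)\<^sup>2 / 4))"
      by (simp add: sum_distrib_left exp_sum)
    then show "ennreal (exp ((1/4) * (\<Sum>i<m. (rowX m p c i W)\<^sup>2))) * indicator (space ?M) W
      = (\<Prod>i<m. ennreal (exp ((rowX m p c i W)\<^sup>2 / 4)))"
      using \<open>W \<in> space ?M\<close> by (simp add: prod_ennreal)
  qed
  also have "\<dots> = (\<Prod>i<m. \<integral>\<^sup>+W. ennreal (exp ((rowX m p c i W)\<^sup>2 / 4)) \<partial>?M)"
    by (rule P.indep_vars_nn_integral[OF _ ind]) auto
  also have "\<dots> = (\<Prod>i<m. ennreal (sqrt 2))"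
    by (intro prod.cong refl mgf_std row_normal[OF assms(1,2) _ assms(4)]) simp
  also have "\<dots> = ennreal (sqrt 2 ^ m)" by (simp add: ennreal_power)
  finally have "emeasure ?M {W \<in> space ?M. a \<le> (\<Sum>i<m. (rowX m p c i W)\<^sup>2)} \<le> ennreal (exp (- a / 4) * sqrt 2 ^ m)"
    by (simp add: ennreal_mult'[symmetric] ennreal_mult[symmetric])
  then show ?thesis
    by (simp add: P.emeasure_eq_measure ennreal_le_iff)
qed

definition gridG :: "nat \<Rightarrow> real set" where
  "gridG m = (\<lambda>k::int. real_of_int k / real m) ` {- int m..int m}"

definition grid :: "nat \<Rightarrow> (nat \<Rightarrow> real) set" where
  "grid m = PiE {..<m} (\<lambda>_. gridG m)"

lemma grid_finite: "finite (grid m)"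
  unfolding grid_def gridG_def by (intro finite_PiE) auto

lemma grid_card: "card (grid m) \<le> (2 * m + 1) ^ m"
proof -
  have "card (gridG m) \<le> card {- int m..int m}" unfolding gridG_def by (rule card_image_le) simp
  also have "\<dots> = 2 * m + 1" by simp
  finally have c: "card (gridG m) \<le> 2 * m + 1" .
  have "card (grid m) = (\<Prod>i<m. card (gridG m))" unfolding grid_def by (rule card_PiE) simp
  also have "\<dots> = card (gridG m) ^ m" by simp
  also have "\<dots> \<le> (2 * m + 1) ^ m" by (rule power_mono[OF c]) simp
  finally show ?thesis .
qed

lemma L2_sq: "(L2_set f A)\<^sup>2 = (\<Sum>i\<in>A. (f i)\<^sup>2)"
  unfolding L2_set_def by (simp add: sum_nonneg)

lemma cs_row:
  "L2_set (mv m A d) {..<m} \<le> sqrt (\<Sum>i<m. \<Sum>j<m. (A i j)\<^sup>2) * L2_set d {..<m}"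
proof -
  have pw: "\<bar>mv m A d i\<bar> \<le> L2_set (A i) {..<m} * \<bar>L2_set d {..<m}\<bar>" for i
  proof -
    have "\<bar>mv m A d i\<bar> \<le> (\<Sum>j<m. \<bar>A i j\<bar> * \<bar>d j\<bar>)"
      unfolding mv_def by (rule order.trans[OF sum_abs]) (simp add: abs_mult)
    also have "\<dots> \<le> L2_set (A i) {..<m} * L2_set d {..<m}" by (rule L2_set_mult_ineq)
    finally show ?thesis by simp
  qed
  have "L2_set (mv m A d) {..<m} \<le> \<bar>L2_set d {..<m}\<bar> * L2_set (\<lambda>i. L2_set (A i) {..<m}) {..<m} + 0 * L2_set (\<lambda>_. 0) {..<m}"
    by (rule L2_pw) (use pw in \<open>auto simp: mult.commute\<close>)
  also have "L2_set (\<lambda>i. L2_set (A i) {..<m}) {..<m} = sqrt (\<Sum>i<m. \<Sum>j<m. (A i j)\<^sup>2)"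
    unfolding L2_set_def[of "\<lambda>i. L2_set (A i) {..<m}"] by (simp add: L2_sq)
  finally show ?thesis by (simp add: mult.commute)
qed

definition ej :: "nat \<Rightarrow> nat \<Rightarrow> nat \<Rightarrow> real" where
  "ej m j = (\<lambda>i\<in>{..<m}. if i = j then 1 else 0)"

lemma ej_grid: "0 < m \<Longrightarrow> ej m j \<in> grid m"
proof -
  assume m: "0 < m"
  have "1 \<in> gridG m" unfolding gridG_def using m by (intro image_eqI[of _ _ "int m"]) auto
  moreover have "0 \<in> gridG m" unfolding gridG_def by (intro image_eqI[of _ _ 0]) auto
  ultimately show ?thesis unfolding grid_def ej_def by auto
qed

lemma ej_L2: "j < m \<Longrightarrow> L2_set (ej m j) {..<m} = 1"
proof -
  assume j: "j < m"
  have "L2_set (ej m j) {..<m} = L2_set (\<lambda>i. if i = j then 1 else 0) {..<m}"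
    by (rule L2_set_cong) (auto simp: ej_def)
  then show ?thesis using L2_unit[OF j] by simp
qed

lemma mv_ej: "j < m \<Longrightarrow> mv m A (ej m j) i = A i j"
proof -
  assume j: "j < m"
  have "mv m A (ej m j) i = (\<Sum>k<m. if k = j then A i k else 0)"
    unfolding mv_def ej_def by (intro sum.cong) auto
  also have "\<dots> = A i j" using j by (subst sum.delta) auto
  finally show ?thesis .
qed

lemma frob:
  assumes "\<forall>w\<in>grid m. (\<Sum>i<m. (mv m A w i)\<^sup>2) \<le> T * (L2_set w {..<m})\<^sup>2" "0 < m"
  shows "(\<Sum>i<m. \<Sum>j<m. (A i j)\<^sup>2) \<le> real m * T"
proof -
  have "(\<Sum>i<m. (A i j)\<^sup>2) \<le> T" if "j < m" for j
    using assms(1)[rule_format, OF ej_grid[OF assms(2), of j]] ej_L2[OF that] mv_ej[OF that] by simp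
  then have "(\<Sum>j<m. \<Sum>i<m. (A i j)\<^sup>2) \<le> (\<Sum>j<m. T)" by (intro sum_mono) auto
  then show ?thesis by (subst sum.swap) simp
qed

lemma round_bounds:
  fixes x :: real and m :: nat
  assumes "\<bar>x\<bar> \<le> real m"
  shows "- int m \<le> round x" "round x \<le> int m" "\<bar>real_of_int (round x) - x\<bar> \<le> 1/2"
proof -
  have a: "real_of_int (round x) \<le> x + 1/2" by (rule of_int_round_le)
  have b: "x - 1/2 \<le> real_of_int (round x)" by (rule of_int_round_ge)
  have "real_of_int (round x) < real m + 1" using a assms by linarith
  then show "round x \<le> int m" by linarith
  have "- real m - 1 < real_of_int (round x)" using b assms by linarith
  then show "- int m \<le> round x" by linarith
  show "\<bar>real_of_int (round x) - x\<bar> \<le> 1/2" using a b by linarith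
qed

lemma unit_opb:
  assumes G: "\<forall>w\<in>grid m. (\<Sum>i<m. (mv m A w i)\<^sup>2) \<le> T * (L2_set w {..<m})\<^sup>2" and m: "0 < m" and T: "0 \<le> T"
    and u1: "L2_set u {..<m} = 1"
  shows "L2_set (mv m A u) {..<m} \<le> 2 * sqrt T"
proof -
  define w where "w = (\<lambda>j\<in>{..<m}. real_of_int (round (u j * real m)) / real m)"
  define d where "d = (\<lambda>j. u j - w j)"
  have ub: "\<bar>u j * real m\<bar> \<le> real m" if "j < m" for j
  proof -
    have "\<bar>u j\<bar> \<le> L2_set (\<lambda>i. \<bar>u i\<bar>) {..<m}" by (rule member_le_L2_set) (use that in auto)
    then have "\<bar>u j\<bar> \<le> 1" using u1 by (simp add: L2_abs)
    then show ?thesis by (simp add: abs_mult mult_left_le_one_le)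
  qed
  have wg: "w \<in> grid m"
    unfolding grid_def w_def gridG_def
    using round_bounds(1,2)[OF ub] by auto
  have db: "\<bar>d j\<bar> \<le> 1 / (2 * real m)" if "j < m" for j
  proof -
    have e: "d j = (u j * real m - real_of_int (round (u j * real m))) / real m"
      using that m by (simp add: d_def w_def field_simps)
    have "\<bar>u j * real m - real_of_int (round (u j * real m))\<bar> \<le> 1/2"
      using round_bounds(3)[OF ub[OF that]] by (simp add: abs_minus_commute)
    then have "\<bar>u j * real m - real_of_int (round (u j * real m))\<bar> / real m \<le> (1/2) / real m"
      by (rule divide_right_mono) simp
    moreover have "\<bar>d j\<bar> = \<bar>u j * real m - real_of_int (round (u j * real m))\<bar> / real m"
      unfolding e abs_divide by simp
    moreover have "(1/2) / real m = 1 / (2 * real m)" by simp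
    ultimately show ?thesis by linarith
  qed
  have L2d: "L2_set d {..<m} \<le> 1 / (2 * sqrt (real m))"
  proof -
    have "L2_set d {..<m} \<le> L2_set (\<lambda>_. 1 / (2 * real m)) {..<m}"
      unfolding L2_abs[of d, symmetric] by (rule L2_set_mono) (use db in auto)
    also have "\<dots> = sqrt (real m) / (2 * real m)" by (simp add: L2_set_constant)
    also have "\<dots> = 1 / (2 * sqrt (real m))"
    proof -
      have sm: "sqrt (real m) > 0" using m by simp
      have "real m = sqrt (real m) * sqrt (real m)" by simp
      then have "sqrt (real m) / (2 * real m) = sqrt (real m) / (2 * sqrt (real m) * sqrt (real m))"
        by (simp add: mult.assoc)
      also have "\<dots> = 1 / (2 * sqrt (real m))" using sm by (simp add: field_simps)
      finally show ?thesis .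
    qed
    finally show ?thesis .
  qed
  have L2w: "L2_set w {..<m} \<le> 3/2"
  proof -
    have "L2_set w {..<m} = L2_set (\<lambda>j. u j - d j) {..<m}" by (rule L2_set_cong) (auto simp: d_def)
    also have "\<dots> \<le> 1 * L2_set u {..<m} + 1 * L2_set d {..<m}" by (rule L2_pw) auto
    also have "1 / (2 * sqrt (real m)) \<le> 1/2" using m by (simp add: divide_simps)
    then have "1 * L2_set u {..<m} + 1 * L2_set d {..<m} \<le> 3/2" using u1 L2d by simp
    finally show ?thesis .
  qed
  have mvw: "L2_set (mv m A w) {..<m} \<le> sqrt T * (3/2)"
  proof -
    have "L2_set (mv m A w) {..<m} = sqrt (\<Sum>i<m. (mv m A w i)\<^sup>2)" by (simp add: L2_set_def)
    also have "\<dots> \<le> sqrt (T * (L2_set w {..<m})\<^sup>2)" using G wg by simp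
    also have "\<dots> = sqrt T * L2_set w {..<m}" by (simp add: real_sqrt_mult)
    also have "\<dots> \<le> sqrt T * (3/2)" using L2w T by (intro mult_left_mono) auto
    finally show ?thesis .
  qed
  have mvd: "L2_set (mv m A d) {..<m} \<le> sqrt T / 2"
  proof -
    have "L2_set (mv m A d) {..<m} \<le> sqrt (\<Sum>i<m. \<Sum>j<m. (A i j)\<^sup>2) * L2_set d {..<m}" by (rule cs_row)
    also have "\<dots> \<le> sqrt (real m * T) * (1 / (2 * sqrt (real m)))"
      using frob[OF G m] L2d T by (intro mult_mono) auto
    also have "\<dots> = sqrt T / 2" using m by (simp add: real_sqrt_mult)
    finally show ?thesis .
  qed
  have split: "mv m A u i = mv m A w i + mv m A d i" if "i < m" for i
    unfolding mv_def d_def by (simp add: sum.distrib[symmetric] algebra_simps)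
  have "L2_set (mv m A u) {..<m} \<le> 1 * L2_set (mv m A w) {..<m} + 1 * L2_set (mv m A d) {..<m}"
    by (rule L2_pw) (auto simp: split abs_triangle_ineq)
  then show ?thesis using mvw mvd by simp
qed

lemma net_opb:
  assumes G: "\<forall>w\<in>grid m. (\<Sum>i<m. (mv m A w i)\<^sup>2) \<le> T * (L2_set w {..<m})\<^sup>2" and m: "0 < m" and T: "0 \<le> T"
  shows "opb m A (2 * sqrt T)"
  unfolding opb_def
proof
  fix v
  show "L2_set (mv m A v) {..<m} \<le> 2 * sqrt T * L2_set v {..<m}"
  proof (cases "L2_set v {..<m} = 0")
    case True
    then have "\<forall>j\<in>{..<m}. v j = 0" by (simp add: L2_set_eq_0_iff)
    then have "mv m A v i = 0" for i unfolding mv_def by simp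
    then have "L2_set (mv m A v) {..<m} = 0" by (simp add: L2_set_def)
    moreover have "0 \<le> 2 * sqrt T * L2_set v {..<m}" using T by simp
    ultimately show ?thesis by linarith
  next
    case False
    define r where "r = L2_set v {..<m}"
    have r: "r > 0" using False L2_set_nonneg[of v "{..<m}"] unfolding r_def by linarith
    define u where "u = (\<lambda>j. v j / r)"
    have u1: "L2_set u {..<m} = 1"
    proof -
      have "L2_set u {..<m} = L2_set v {..<m} * (1 / r)" unfolding u_def
        by (subst L2_set_left_distrib) (use r in auto)
      then show ?thesis using r unfolding r_def by simp
    qed
    have "mv m A v i = r * mv m A u i" for i
      unfolding mv_def u_def using r by (simp add: sum_distrib_left)
    then have "L2_set (mv m A v) {..<m} = L2_set (\<lambda>x. r * mv m A u x) {..<m}"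
      by (intro L2_set_cong) auto
    also have "\<dots> = r * L2_set (mv m A u) {..<m}"
      using r by (simp add: L2_set_right_distrib)
    finally have "L2_set (mv m A v) {..<m} = r * L2_set (mv m A u) {..<m}" .
    also have "\<dots> \<le> r * (2 * sqrt T)" using unit_opb[OF G m T u1] r by (intro mult_left_mono) auto
    finally show ?thesis unfolding r_def by (simp add: mult.commute)
  qed
qed

definition Wm :: "(widx \<Rightarrow> real) \<Rightarrow> nat \<Rightarrow> nat \<Rightarrow> nat \<Rightarrow> real" where
  "Wm W p = (\<lambda>i j. W (p, 2, i, j))"

definition badw where
  "badw L n m p T w = {W \<in> space (init_measure L n m). T * (L2_set w {..<m})\<^sup>2 < (\<Sum>i<m. (mv m (Wm W p) w i)\<^sup>2)}"

lemma badw_sets: "badw L n m p T w \<in> sets (init_measure L n m)"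
proof -
  note cm[measurable] = coord_meas[of _ L n m]
  show ?thesis unfolding badw_def mv_def Wm_def by measurable
qed

lemma badw_measure:
  assumes "1 \<le> p" "p \<le> L" "0 < m"
  shows "measure (init_measure L n m) (badw L n m p T w) \<le> exp (- T / 4) * sqrt 2 ^ m"
proof (cases "L2_set w {..<m} = 0")
  case True
  then have "\<forall>j\<in>{..<m}. w j = 0" by (simp add: L2_set_eq_0_iff)
  then have "mv m A w i = 0" for A i unfolding mv_def by simp
  then have "badw L n m p T w = {}" unfolding badw_def using True by simp
  then show ?thesis by simp
next
  case False
  define r where "r = L2_set w {..<m}"
  have r: "r > 0" using False L2_set_nonneg[of w "{..<m}"] unfolding r_def by linarith
  define c where "c = (\<lambda>j. w j / r)"
  have c1: "(\<Sum>j<m. (c j)\<^sup>2) = 1"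
  proof -
    have "(\<Sum>j<m. (c j)\<^sup>2) = (\<Sum>j<m. (w j)\<^sup>2) / r\<^sup>2"
      unfolding c_def by (simp add: power_divide sum_divide_distrib)
    also have "(\<Sum>j<m. (w j)\<^sup>2) = r\<^sup>2" unfolding r_def by (simp add: L2_sq)
    finally show ?thesis using r by simp
  qed
  have mvr: "mv m (Wm W p) w i = r * rowX m p c i W" for W i
    unfolding mv_def rowX_def Wm_def c_def using r by (simp add: sum_distrib_left)
  have sub: "badw L n m p T w \<subseteq> {W \<in> space (init_measure L n m). T \<le> (\<Sum>i<m. (rowX m p c i W)\<^sup>2)}"
  proof
    fix W assume "W \<in> badw L n m p T w"
    then have W: "W \<in> space (init_measure L n m)" and lt: "T * r\<^sup>2 < (\<Sum>i<m. (mv m (Wm W p) w i)\<^sup>2)"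
      unfolding badw_def r_def by auto
    have "(\<Sum>i<m. (mv m (Wm W p) w i)\<^sup>2) = r\<^sup>2 * (\<Sum>i<m. (rowX m p c i W)\<^sup>2)"
      by (simp add: mvr power_mult_distrib sum_distrib_left)
    with lt have "T * r\<^sup>2 < r\<^sup>2 * (\<Sum>i<m. (rowX m p c i W)\<^sup>2)" by simp
    then have "T < (\<Sum>i<m. (rowX m p c i W)\<^sup>2)" using r by (simp add: mult.commute)
    then show "W \<in> {W \<in> space (init_measure L n m). T \<le> (\<Sum>i<m. (rowX m p c i W)\<^sup>2)}" using W by simp
  qed
  have ms: "{W \<in> space (init_measure L n m). T \<le> (\<Sum>i<m. (rowX m p c i W)\<^sup>2)} \<in> sets (init_measure L n m)"
  proof -
    note cm[measurable] = coord_meas[of _ L n m]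
    show ?thesis unfolding rowX_def by measurable
  qed
  interpret P: prob_space "init_measure L n m" by (rule prob_init)
  have "measure (init_measure L n m) (badw L n m p T w) \<le> measure (init_measure L n m) {W \<in> space (init_measure L n m). T \<le> (\<Sum>i<m. (rowX m p c i W)\<^sup>2)}"
    by (rule P.finite_measure_mono[OF sub ms])
  also have "\<dots> \<le> exp (- T / 4) * sqrt 2 ^ m" by (rule row_chernoff[OF assms c1])
  finally show ?thesis .
qed

definition badp where
  "badp L n m p T = (\<Union>w\<in>grid m. badw L n m p T w)"

lemma badp_sets: "badp L n m p T \<in> sets (init_measure L n m)"
  unfolding badp_def using grid_finite badw_sets by (intro sets.finite_UN) auto

lemma badp_measure:
  assumes "1 \<le> p" "p \<le> L" "0 < m"
  shows "measure (init_measure L n m) (badp L n m p T) \<le> real ((2 * m + 1) ^ m) * (exp (- T / 4) * sqrt 2 ^ m)"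
proof -
  interpret P: prob_space "init_measure L n m" by (rule prob_init)
  have "measure (init_measure L n m) (badp L n m p T) \<le> (\<Sum>w\<in>grid m. measure (init_measure L n m) (badw L n m p T w))"
    unfolding badp_def by (rule P.finite_measure_subadditive_finite) (use grid_finite badw_sets in auto)
  also have "\<dots> \<le> (\<Sum>w\<in>grid m. exp (- T / 4) * sqrt 2 ^ m)"
    by (intro sum_mono badw_measure assms)
  also have "\<dots> = real (card (grid m)) * (exp (- T / 4) * sqrt 2 ^ m)" by simp
  also have "\<dots> \<le> real ((2 * m + 1) ^ m) * (exp (- T / 4) * sqrt 2 ^ m)"
    by (intro mult_right_mono) (use grid_card in \<open>simp_all del: of_nat_power\<close>)
  finally show ?thesis .
qed

lemma good_opb:
  assumes "W \<in> space (init_measure L n m) - badp L n m p T" "0 < m" "0 \<le> T"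
  shows "opb m (\<lambda>i j. W (p, 2, i, j)) (2 * sqrt T)"
proof -
  have "\<forall>w\<in>grid m. (\<Sum>i<m. (mv m (Wm W p) w i)\<^sup>2) \<le> T * (L2_set w {..<m})\<^sup>2"
    using assms(1) unfolding badp_def badw_def by (auto simp: not_less)
  from net_opb[OF this assms(2,3)] show ?thesis by (simp add: Wm_def)
qed

lemma ln_ge1: "3 \<le> m \<Longrightarrow> 1 \<le> ln (real m)"
  using exp_le by (subst ln_ge_iff) auto

lemma num_prob:
  assumes m: "3 \<le> m"
  shows "real ((2 * m + 1) ^ m) * (exp (- (16 * real m * ln (real m)) / 4) * sqrt 2 ^ m) \<le> (1 / real m) ^ m"
proof -
  have mp: "real m > 0" using m by simp
  have e4: "exp (- (16 * real m * ln (real m)) / 4) = (1 / real m ^ 4) ^ m"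
  proof -
    have "exp (- (16 * real m * ln (real m)) / 4) = exp (real m * (- (real 4 * ln (real m))))" by simp
    also have "\<dots> = exp (- (real 4 * ln (real m))) ^ m" by (rule exp_of_nat_mult)
    also have "exp (- (real 4 * ln (real m))) = 1 / exp (real 4 * ln (real m))" by (simp add: exp_minus field_simps)
    also have "exp (real 4 * ln (real m)) = real m ^ 4" by (subst exp_of_nat_mult) (use mp in simp)
    finally show ?thesis .
  qed
  have s2: "sqrt 2 \<le> 3/2" by (rule real_le_lsqrt) (auto simp: power2_eq_square)
  have "(2 * real m + 1) * sqrt 2 \<le> (2 * real m + 1) * (3/2)" using s2 by (intro mult_left_mono) auto
  also have "\<dots> \<le> real m ^ 3"
  proof -
    have m3: "3 \<le> real m" using m by simp
    have "3 * 3 \<le> real m * real m" by (rule mult_mono[OF m3 m3]) auto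
    then have "9 * real m \<le> (real m * real m) * real m" by (intro mult_right_mono) auto
    then have c: "9 * real m \<le> real m ^ 3" by (simp only: power3_eq_cube)
    have "(2 * real m + 1) * (3 / 2) = 3 * real m + 3 / 2" by (simp add: algebra_simps)
    then show ?thesis using c m3 by linarith
  qed
  finally have key: "(2 * real m + 1) * sqrt 2 \<le> real m ^ 3" .
  have base: "(2 * real m + 1) * (1 / real m ^ 4) * sqrt 2 \<le> 1 / real m"
  proof -
    have "(2 * real m + 1) * (1 / real m ^ 4) * sqrt 2 = ((2 * real m + 1) * sqrt 2) / real m ^ 4" by simp
    also have "\<dots> \<le> real m ^ 3 / real m ^ 4" by (rule divide_right_mono[OF key]) simp
    also have "\<dots> = 1 / real m" using mp by (simp add: field_simps power_eq_if)
    finally show ?thesis .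
  qed
  have "real ((2 * m + 1) ^ m) * (exp (- (16 * real m * ln (real m)) / 4) * sqrt 2 ^ m)
      = ((2 * real m + 1) * (1 / real m ^ 4) * sqrt 2) ^ m"
    unfolding e4 power_mult_distrib by (simp add: mult.commute mult.left_commute add.commute)
  also have "\<dots> \<le> (1 / real m) ^ m" by (rule power_mono[OF base]) simp
  finally show ?thesis .
qed

lemma num_final:
  assumes m: "3 \<le> m" "L \<le> m"
  shows "real L * (1 / real m) ^ m \<le> real m * exp (- 1 * (ln (real m))\<^sup>2)"
proof -
  have mp: "real m > 0" using m by simp
  have "(1 / real m) ^ m = exp (- (real m * ln (real m)))"
  proof -
    have "exp (real m * (- ln (real m))) = exp (- ln (real m)) ^ m" by (rule exp_of_nat_mult)
    then show ?thesis using mp by (simp add: exp_minus power_one_over divide_inverse power_inverse)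
  qed
  also have "\<dots> \<le> exp (- 1 * (ln (real m))\<^sup>2)"
  proof -
    have "ln (real m) \<le> real m" using mp by (rule ln_bound)
    moreover have "0 \<le> ln (real m)" using ln_ge1[OF m(1)] by simp
    ultimately have "ln (real m) * ln (real m) \<le> real m * ln (real m)" by (rule mult_right_mono)
    then show ?thesis by (simp add: power2_eq_square)
  qed
  finally have a: "(1 / real m) ^ m \<le> exp (- 1 * (ln (real m))\<^sup>2)" .
  show ?thesis using m(2) a by (intro mult_mono) auto
qed

lemma num_bound:
  assumes m: "3 \<le> m" and lL: "l \<le> L"
  shows "2 * (5 * (2 * sqrt (16 * real m * ln (real m)) / sqrt (real m) + 1)) ^ (L - l) / sqrt (real m)
     \<le> (2 * 45 ^ L) * (ln (real m)) ^ L / sqrt (real m)"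
proof -
  have mp: "real m > 0" using m by simp
  have l1: "1 \<le> ln (real m)" by (rule ln_ge1[OF m])
  have "2 * sqrt (16 * real m * ln (real m)) / sqrt (real m) = 8 * sqrt (ln (real m))"
    using mp by (simp add: real_sqrt_mult)
  moreover have "sqrt (ln (real m)) \<le> ln (real m)"
  proof -
    have s1: "1 \<le> sqrt (ln (real m))" using l1 by simp
    have "sqrt (ln (real m)) * 1 \<le> sqrt (ln (real m)) * sqrt (ln (real m))"
      by (rule mult_left_mono[OF s1]) (use l1 in simp)
    also have "\<dots> = ln (real m)" using l1 by simp
    finally show ?thesis by simp
  qed
  ultimately have K: "5 * (2 * sqrt (16 * real m * ln (real m)) / sqrt (real m) + 1) \<le> 45 * ln (real m)"
  proof -
    assume eq: "2 * sqrt (16 * real m * ln (real m)) / sqrt (real m) = 8 * sqrt (ln (real m))"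
      and le: "sqrt (ln (real m)) \<le> ln (real m)"
    have "5 * (2 * sqrt (16 * real m * ln (real m)) / sqrt (real m) + 1) = 5 * (8 * sqrt (ln (real m)) + 1)"
      by (simp only: eq)
    also have "\<dots> = 40 * sqrt (ln (real m)) + 5" by (simp add: algebra_simps)
    also have "\<dots> \<le> 45 * ln (real m)" using le l1 by linarith
    finally show ?thesis .
  qed
  have K0: "0 \<le> 5 * (2 * sqrt (16 * real m * ln (real m)) / sqrt (real m) + 1)" using mp l1 by simp
  have "(5 * (2 * sqrt (16 * real m * ln (real m)) / sqrt (real m) + 1)) ^ (L - l) \<le> (45 * ln (real m)) ^ (L - l)"
    by (rule power_mono[OF K K0])
  also have "\<dots> \<le> (45 * ln (real m)) ^ L" by (rule power_increasing) (use l1 in auto)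
  also have "\<dots> = 45 ^ L * ln (real m) ^ L" by (simp add: power_mult_distrib)
  finally have "2 * (5 * (2 * sqrt (16 * real m * ln (real m)) / sqrt (real m) + 1)) ^ (L - l) \<le> (2 * 45 ^ L) * (ln (real m)) ^ L"
    by simp
  then show ?thesis by (rule divide_right_mono) simp
qed

lemma main_fixed:
  fixes lam :: real and L n l m s :: nat and y z0 u0 :: "nat \<Rightarrow> real"
  assumes "1 \<le> l" "l \<le> L" "max L 3 \<le> m" "s < m"
  shows "measure (init_measure L n m)
       {W \<in> space (init_measure L n m).
          admm_b_supnorm lam L n m W y z0 u0 l s \<le> (2 * 45 ^ L) * (ln (real m)) ^ L / sqrt (real m)}
     \<ge> 1 - real m * exp (- 1 * (ln (real m))\<^sup>2)"
proof -
  let ?M = "init_measure L n m"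
  interpret P: prob_space ?M by (rule prob_init)
  have m3: "3 \<le> m" and Lm: "L \<le> m" using assms(3) by auto
  have m0: "0 < m" using m3 by simp
  define T where "T = 16 * real m * ln (real m)"
  have T0: "0 \<le> T" unfolding T_def using ln_ge1[OF m3] by simp
  define U where "U = (\<Union>p\<in>{1..L}. badp L n m p T)"
  have Us: "U \<in> sets ?M" unfolding U_def by (intro sets.finite_UN) (auto intro: badp_sets)
  define E where "E = {W \<in> space ?M. admm_b_supnorm lam L n m W y z0 u0 l s \<le> (2 * 45 ^ L) * (ln (real m)) ^ L / sqrt (real m)}"
  have Es: "E \<in> sets ?M"
  proof -
    note f[measurable] = supnorm_meas[of ?M, OF coord_meas assms(4) assms(2)]
    show ?thesis unfolding E_def by measurable
  qed
  have sub: "space ?M - U \<subseteq> E"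
  proof
    fix W assume W: "W \<in> space ?M - U"
    have op: "\<forall>q. l < q \<and> q \<le> L \<longrightarrow> opb m (\<lambda>i j. W (q, 2, i, j)) (2 * sqrt T)"
    proof (intro allI impI)
      fix q assume q: "l < q \<and> q \<le> L"
      then have "W \<in> space ?M - badp L n m q T" using W assms(1) unfolding U_def by auto
      then show "opb m (\<lambda>i j. W (q, 2, i, j)) (2 * sqrt T)" by (rule good_opb[OF _ m0 T0])
    qed
    have bj: "\<bar>admm_b lam L n m W y z0 u0 l s j\<bar> \<le> (2 * 45 ^ L) * (ln (real m)) ^ L / sqrt (real m)" if "j < m" for j
    proof -
      have "\<bar>admm_b lam L n m W y z0 u0 l s j\<bar> \<le> 2 * (5 * (2 * sqrt T / sqrt (real m) + 1)) ^ (L - l) / sqrt (real m)"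
        by (rule b_bound[OF that assms(4) assms(2) _ op]) (use T0 in simp)
      also have "\<dots> \<le> (2 * 45 ^ L) * (ln (real m)) ^ L / sqrt (real m)"
        unfolding T_def by (rule num_bound[OF m3 assms(2)])
      finally show ?thesis .
    qed
    have "admm_b_supnorm lam L n m W y z0 u0 l s \<le> (2 * 45 ^ L) * (ln (real m)) ^ L / sqrt (real m)"
      unfolding admm_b_supnorm_def using m0 bj by (subst Max_le_iff) auto
    then show "W \<in> E" using W unfolding E_def by auto
  qed
  have "measure ?M U \<le> (\<Sum>p\<in>{1..L}. measure ?M (badp L n m p T))"
    unfolding U_def by (rule P.finite_measure_subadditive_finite) (auto intro: badp_sets)
  also have "\<dots> \<le> (\<Sum>p\<in>{1..L}. (1 / real m) ^ m)"
  proof (rule sum_mono)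
    fix p assume p: "p \<in> {1..L}"
    have "measure ?M (badp L n m p T) \<le> real ((2 * m + 1) ^ m) * (exp (- T / 4) * sqrt 2 ^ m)"
      by (rule badp_measure) (use p m0 in auto)
    also have "\<dots> \<le> (1 / real m) ^ m" unfolding T_def by (rule num_prob[OF m3])
    finally show "measure ?M (badp L n m p T) \<le> (1 / real m) ^ m" .
  qed
  also have "\<dots> = real L * (1 / real m) ^ m" by simp
  also have "\<dots> \<le> real m * exp (- 1 * (ln (real m))\<^sup>2)" by (rule num_final[OF m3 Lm])
  finally have mU: "measure ?M U \<le> real m * exp (- 1 * (ln (real m))\<^sup>2)" .
  have "measure ?M (space ?M - U) = 1 - measure ?M U" by (rule P.prob_compl[OF Us])
  moreover have "measure ?M (space ?M - U) \<le> measure ?M E" by (rule P.finite_measure_mono[OF sub Es])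
  ultimately have "1 - measure ?M U \<le> measure ?M E" by simp
  then show ?thesis using mU unfolding E_def by simp
qed

theorem lemma11:
  fixes lam Cy Cz Cu :: real and L n l :: nat
  assumes "lam > 0" and "n \<ge> 1" and "1 \<le> l" and "l \<le> L"
  shows "\<exists>c>0. \<exists>C::real. \<exists>k::nat. \<exists>M0::nat. \<forall>m\<ge>M0. \<forall>y z0 u0 :: nat \<Rightarrow> real. \<forall>s<m.
     (\<forall>i<n. \<bar>y i\<bar> \<le> Cy) \<longrightarrow> (\<forall>i<m. \<bar>z0 i\<bar> \<le> Cz) \<longrightarrow> (\<forall>i<m. \<bar>u0 i\<bar> \<le> Cu) \<longrightarrow>
     measure (init_measure L n m)
       {W \<in> space (init_measure L n m).
          admm_b_supnorm lam L n m W y z0 u0 l s \<le> C * (ln (real m)) ^ k / sqrt (real m)}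
     \<ge> 1 - real m * exp (- c * (ln (real m))\<^sup>2)"
  apply (rule exI[of _ "1::real"])
  apply (rule conjI)
   apply simp
  apply (rule exI[of _ "2 * 45 ^ L :: real"], rule exI[of _ L], rule exI[of _ "max L 3"])
  apply (intro allI impI)
  apply (rule main_fixed)
  using assms apply auto
  done


end
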